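(* Let $\mathbb X,\mathbb Y$ be Euclidean spaces, $g\colon\mathbb X\to\mathbb Y$ twice continuously differentiable, $D\subset\mathbb Y$ closed, $\Phi(x):=g(x)-D$, $(\bar x,0)\in\operatorname{gph}\Phi$, $u\in\mathbb S_{\mathbb X}$. Assume: (Q1) for all $y^*,z^*$: [$\nabla g(\bar x)^*y^*=0$, $\nabla^2\langle y^*,g\rangle(\bar x)(u)+\nabla g(\bar x)^*z^*=0$, $y^*\in\mathcal N_D(g(\bar x);\nabla g(\bar x)u)$, $z^*\in D\mathcal N_D(g(\bar x),y^* )(\nabla g(\bar x)u)$] implies $y^*=0$; and either (Q2): for all $y^*,\hat z^*$: [$\nabla g(\bar x)^*y^*=0$, $\nabla g(\bar x)^*\hat z^*=0$, $y^*\in\mathcal N_D(g(\bar x);\nabla g(\bar x)u)$, $\hat z^*\in D\mathcal N_D(g(\bar x),y^* )(0)$] implies $\hat z^*=0$; or (Q3): $\nabla g(\bar x)u\ne0$ and for all $y^*,\hat z^*$: [$\nabla g(\bar x)^*y^*=0$, $\nabla g(\bar x)^*\hat z^*=0$, $y^*\in\mathcal N_D(g(\bar x);\nabla g(\bar x)u)$] implies $\hat z^*\notin D_{\mathrm{sub}}\mathcal N_D(g(\bar x),y^* )(\nabla g(\bar x)u/\|\nabla g(\bar x)u\|)$. If for each $x^*\in\mathbb X$ and $y^*,z^*\in\mathbb Y$ satisfying $x^*=\nabla^2\langle y^*,g\rangle(\bar x)(u)+\nabla g(\bar x)^*z^*$, $y^*\in\mathcal N_D(g(\bar x);\nabla g(\bar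 x)u)\cap\ker\nabla g(\bar x)^*$, $z^*\in D\mathcal N_D(g(\bar x),y^* )(\nabla g(\bar x)u)$, there is $\lambda\in\mathcal N_D(g(\bar x))$ with $x^*=\nabla g(\bar x)^*\lambda$, then $\Phi$ is asymptotically regular at $(\bar x,0)$ in direction $u$. Moreover, $\Phi$ is strongly asymptotically regular at $(\bar x,0)$ in direction $u$ if such $\lambda$ can always be chosen from $\mathcal N_D(g(\bar x);\nabla g(\bar x)u)$.
   Context: $\nabla^2\langle y^*,g\rangle(\bar x)(u)\in\mathbb X$ is the Hessian of $x\mapsto\langle y^*,g(x)\rangle$ applied to $u$. $\mathcal N_D$ is the limiting normal cone; $\mathcal N_D(y;w)$ the directional limiting normal cone (all $\eta$ with $w_k\to w$, $t_k\downarrow0$, $\eta_k\to\eta$, $\eta_k\in\widehat{\mathcal N}_D(y+t_kw_k)$). $D\mathcal N_D(\bar y,\bar y^* )$ is the graphical derivative (graph $=\mathcal T_{\operatorname{gph}\mathcal N_D}(\bar y,\bar y^* )$); $D_{\mathrm{sub}}\mathcal N_D(\bar y,\bar y^* )(w)$, $w\in\mathbb S_{\mathbb Y}$, is the set of $q\in\mathbb S_{\mathbb Y}$ with $w_k\to w$, $q_k\to q$, $t_k,\tau_k\downarrow0$, $\tau_k/t_k\to\infty$, $\bar y^*+\tau_kq_k\in\mathcal N_D(\bar y+t_kw_k)$. Asymptotic regularity in direction $u$ at $(\bar x,0)$: for all $(x_k,y_k)\in\operatorname{gph}\Phi$, $x_k^*$, $\lambda_k$, $x^*$, $y^*$ with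 $x_k\notin\Phi^{-1}(0)$, $y_k\ne0$, $x_k^*\in\widehat D^*\Phi(x_k,y_k)(\lambda_k)$ and $x_k\to\bar x$, $y_k\to0$, $x_k^*\to x^*$, $\frac{x_k-\bar x}{\|x_k-\bar x\|}\to u$, $\frac{y_k}{\|x_k-\bar x\|}\to0$, $\frac{\|y_k\|}{\|x_k-\bar x\|}\lambda_k\to y^*$, $\|\lambda_k\|\to\infty$, $\frac{y_k}{\|y_k\|}-\frac{\lambda_k}{\|\lambda_k\|}\to0$, one has $x^*\in\operatorname{Im}D^*\Phi(\bar x,0)$; strong asymptotic regularity requires $x^*\in\operatorname{Im}D^*\Phi((\bar x,0);(u,0))$ instead. Here $\widehat D^*\Phi(x,y)(y^* )=\{x^*\mid(x^*,-y^* )\in\widehat{\mathcal N}_{\operatorname{gph}\Phi}(x,y)\}$, $D^*$ with the limiting normal cone, $D^*\Phi((\bar x,0);(u,0))$ with the directional limiting normal cone to $\operatorname{gph}\Phi$, and $\operatorname{Im}\Psi=\bigcup\Psi(y^* )$. *)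

theory Defs
  imports "HOL-Analysis.Analysis"
begin

definition reg_normal :: "'a::real_inner set \<Rightarrow> 'a \<Rightarrow> 'a set" where
  "reg_normal C z = {\<eta>. z \<in> C \<and>
     (\<forall>\<epsilon>>0. \<exists>\<delta>>0. \<forall>z'\<in>C. norm (z' - z) < \<delta> \<longrightarrow> \<eta> \<bullet> (z' - z) \<le> \<epsilon> * norm (z' - z))}"

definition lim_normal :: "'a::real_inner set \<Rightarrow> 'a \<Rightarrow> 'a set" where
  "lim_normal C z = {\<eta>. \<exists>zk \<eta>k. (zk \<longlonglongrightarrow> z) \<and> (\<eta>k \<longlonglongrightarrow> \<eta>) \<and>
     (\<forall>k. zk k \<in> C \<and> \<eta>k k \<in> reg_normal C (zk k))}"

definition dir_normal :: "'a::real_inner set \<Rightarrow> 'a \<Rightarrow> 'a \<Rightarrow> 'a set" where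
  "dir_normal C z w = {\<eta>. \<exists>tk wk \<eta>k. (\<forall>k. tk k > 0) \<and> (tk \<longlonglongrightarrow> 0) \<and>
     (wk \<longlonglongrightarrow> w) \<and> (\<eta>k \<longlonglongrightarrow> \<eta>) \<and> (\<forall>k. \<eta>k k \<in> reg_normal C (z + tk k *\<^sub>R wk k))}"

definition tangent_cone :: "'a::real_normed_vector set \<Rightarrow> 'a \<Rightarrow> 'a set" where
  "tangent_cone C z = {v. \<exists>tk vk. (\<forall>k. tk k > 0) \<and> (tk \<longlonglongrightarrow> 0) \<and>
     (vk \<longlonglongrightarrow> v) \<and> (\<forall>k. z + tk k *\<^sub>R vk k \<in> C)}"

definition gph_normal :: "'a::real_inner set \<Rightarrow> ('a \<times> 'a) set" where
  "gph_normal D = {(y, \<eta>). \<eta> \<in> lim_normal D y}"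

definition graph_deriv_normal :: "'a::real_inner set \<Rightarrow> 'a \<Rightarrow> 'a \<Rightarrow> 'a \<Rightarrow> 'a set" where
  "graph_deriv_normal D y ys w = {q. (w, q) \<in> tangent_cone (gph_normal D) (y, ys)}"

definition Dsub_normal :: "'a::real_inner set \<Rightarrow> 'a \<Rightarrow> 'a \<Rightarrow> 'a \<Rightarrow> 'a set" where
  "Dsub_normal D y ys w = {q. norm q = 1 \<and>
     (\<exists>wk qk tk \<tau>k. (wk \<longlonglongrightarrow> w) \<and> (qk \<longlonglongrightarrow> q) \<and>
        (\<forall>k. tk k > 0 \<and> \<tau>k k > 0) \<and> (tk \<longlonglongrightarrow> 0) \<and> (\<tau>k \<longlonglongrightarrow> 0) \<and>
        filterlim (\<lambda>k. \<tau>k k / tk k) at_top sequentially \<and>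
        (\<forall>k. ys + \<tau>k k *\<^sub>R qk k \<in> lim_normal D (y + tk k *\<^sub>R wk k)))}"

definition gph_Phi :: "('a \<Rightarrow> 'b::real_normed_vector) \<Rightarrow> 'b set \<Rightarrow> ('a \<times> 'b) set" where
  "gph_Phi g D = {(x, y). g x - y \<in> D}"

definition reg_coderiv :: "('a::real_inner \<times> 'b::real_inner) set \<Rightarrow> 'a \<Rightarrow> 'b \<Rightarrow> 'b \<Rightarrow> 'a set" where
  "reg_coderiv G x y ys = {xs. (xs, - ys) \<in> reg_normal G (x, y)}"

definition lim_coderiv :: "('a::real_inner \<times> 'b::real_inner) set \<Rightarrow> 'a \<Rightarrow> 'b \<Rightarrow> 'b \<Rightarrow> 'a set" where
  "lim_coderiv G x y ys = {xs. (xs, - ys) \<in> lim_normal G (x, y)}"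

definition dir_coderiv :: "('a::real_inner \<times> 'b::real_inner) set \<Rightarrow> 'a \<Rightarrow> 'b \<Rightarrow> 'a \<Rightarrow> 'b \<Rightarrow> 'b \<Rightarrow> 'a set" where
  "dir_coderiv G x y u v ys = {xs. (xs, - ys) \<in> dir_normal G (x, y) (u, v)}"

text \<open>Premises of (strong) asymptotic regularity in direction \<open>u\<close> at \<open>(xb,0)\<close>.\<close>
definition asym_seq :: "('a::real_inner \<times> 'b::real_inner) set \<Rightarrow> 'a \<Rightarrow> 'a \<Rightarrow>
    (nat \<Rightarrow> 'a) \<Rightarrow> (nat \<Rightarrow> 'b) \<Rightarrow> (nat \<Rightarrow> 'a) \<Rightarrow> (nat \<Rightarrow> 'b) \<Rightarrow> 'a \<Rightarrow> 'b \<Rightarrow> bool" where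
  "asym_seq G xb u xk yk xsk lk xs ys \<longleftrightarrow>
     (\<forall>k. (xk k, yk k) \<in> G \<and> (xk k, 0) \<notin> G \<and> yk k \<noteq> 0 \<and>
          xsk k \<in> reg_coderiv G (xk k) (yk k) (lk k)) \<and>
     (xk \<longlonglongrightarrow> xb) \<and> (yk \<longlonglongrightarrow> 0) \<and> (xsk \<longlonglongrightarrow> xs) \<and>
     ((\<lambda>k. (1 / norm (xk k - xb)) *\<^sub>R (xk k - xb)) \<longlonglongrightarrow> u) \<and>
     ((\<lambda>k. (1 / norm (xk k - xb)) *\<^sub>R yk k) \<longlonglongrightarrow> 0) \<and>
     ((\<lambda>k. (norm (yk k) / norm (xk k - xb)) *\<^sub>R lk k) \<longlonglongrightarrow> ys) \<and>
     filterlim (\<lambda>k. norm (lk k)) at_top sequentially \<and>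
     ((\<lambda>k. (1 / norm (yk k)) *\<^sub>R yk k - (1 / norm (lk k)) *\<^sub>R lk k) \<longlonglongrightarrow> 0)"

definition asym_regular :: "('a::real_inner \<times> 'b::real_inner) set \<Rightarrow> 'a \<Rightarrow> 'a \<Rightarrow> bool" where
  "asym_regular G xb u \<longleftrightarrow> (\<forall>xk yk xsk lk xs ys. asym_seq G xb u xk yk xsk lk xs ys \<longrightarrow>
      xs \<in> (\<Union>ys'. lim_coderiv G xb 0 ys'))"

definition strong_asym_regular :: "('a::real_inner \<times> 'b::real_inner) set \<Rightarrow> 'a \<Rightarrow> 'a \<Rightarrow> bool" where
  "strong_asym_regular G xb u \<longleftrightarrow> (\<forall>xk yk xsk lk xs ys. asym_seq G xb u xk yk xsk lk xs ys \<longrightarrow>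
      xs \<in> (\<Union>ys'. dir_coderiv G xb 0 u 0 ys'))"

end

theory Submission
  imports Defs
begin


lemma adj_works:
  fixes F :: "'a::euclidean_space \<Rightarrow>\<^sub>L 'b::euclidean_space"
  shows "x \<bullet> adjoint (blinfun_apply F) y = F x \<bullet> y"
  by (rule adjoint_works) (simp add: bounded_linear.linear blinfun.bounded_linear_right)

lemma adj_linear:
  fixes F :: "'a::euclidean_space \<Rightarrow>\<^sub>L 'b::euclidean_space"
  shows "linear (adjoint (blinfun_apply F))"
  by (rule adjoint_linear) (simp add: bounded_linear.linear blinfun.bounded_linear_right)

lemma adj_eqI:
  fixes a b :: "'a::euclidean_space"
  assumes "\<And>x. x \<bullet> a = x \<bullet> b" shows "a = b"
  by (metis assms vector_eq_ldot)

lemma adj_add: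
  fixes F G :: "'a::euclidean_space \<Rightarrow>\<^sub>L 'b::euclidean_space"
  shows "adjoint (blinfun_apply (F + G)) y = adjoint (blinfun_apply F) y + adjoint (blinfun_apply G) y"
  by (rule adj_eqI) (simp add: adj_works inner_add_right blinfun.add_left inner_add_left)

lemma adj_diff:
  fixes F G :: "'a::euclidean_space \<Rightarrow>\<^sub>L 'b::euclidean_space"
  shows "adjoint (blinfun_apply (F - G)) y = adjoint (blinfun_apply F) y - adjoint (blinfun_apply G) y"
  by (rule adj_eqI) (simp add: adj_works inner_diff_right blinfun.diff_left inner_diff_left)

lemma adj_scale:
  fixes F :: "'a::euclidean_space \<Rightarrow>\<^sub>L 'b::euclidean_space"
  shows "adjoint (blinfun_apply (c *\<^sub>R F)) y = c *\<^sub>R adjoint (blinfun_apply F) y"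
  by (rule adj_eqI) (simp add: adj_works blinfun.scaleR_left)

lemma adj_scale_arg:
  fixes F :: "'a::euclidean_space \<Rightarrow>\<^sub>L 'b::euclidean_space"
  shows "adjoint (blinfun_apply F) (c *\<^sub>R y) = c *\<^sub>R adjoint (blinfun_apply F) y"
  by (rule adj_eqI) (simp add: adj_works)

lemma adj_add_arg:
  fixes F :: "'a::euclidean_space \<Rightarrow>\<^sub>L 'b::euclidean_space"
  shows "adjoint (blinfun_apply F) (y + z) = adjoint (blinfun_apply F) y + adjoint (blinfun_apply F) z"
  by (rule adj_eqI) (simp add: adj_works inner_add_right inner_add_left)

lemma adj_diff_arg:
  fixes F :: "'a::euclidean_space \<Rightarrow>\<^sub>L 'b::euclidean_space"
  shows "adjoint (blinfun_apply F) (y - z) = adjoint (blinfun_apply F) y - adjoint (blinfun_apply F) z"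
  by (rule adj_eqI) (simp add: adj_works inner_diff_right inner_diff_left)

lemma adj_norm:
  fixes F :: "'a::euclidean_space \<Rightarrow>\<^sub>L 'b::euclidean_space"
  shows "norm (adjoint (blinfun_apply F) y) \<le> norm F * norm y"
proof -
  define a where "a = adjoint (blinfun_apply F) y"
  have "norm a ^ 2 = F a \<bullet> y" by (simp add: a_def adj_works power2_norm_eq_inner)
  also have "\<dots> \<le> norm (F a) * norm y" by (meson Cauchy_Schwarz_ineq2 abs_le_D1)
  also have "\<dots> \<le> norm F * norm a * norm y"
    by (simp add: mult_right_mono norm_blinfun)
  finally have "norm a ^ 2 \<le> norm F * norm y * norm a" by (simp add: algebra_simps)
  then show ?thesis unfolding a_def[symmetric]
    by (cases "norm a = 0") (auto simp: power2_eq_square mult_le_cancel_right)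
qed

lemma adj_tendsto:
  fixes F :: "nat \<Rightarrow> 'a::euclidean_space \<Rightarrow>\<^sub>L 'b::euclidean_space"
  assumes "F \<longlonglongrightarrow> F0" "y \<longlonglongrightarrow> y0"
  shows "(\<lambda>k. adjoint (blinfun_apply (F k)) (y k)) \<longlonglongrightarrow> adjoint (blinfun_apply F0) y0"
proof -
  have e: "adjoint (blinfun_apply (F k)) (y k) - adjoint (blinfun_apply F0) y0 =
     adjoint (blinfun_apply (F k - F0)) (y k) + adjoint (blinfun_apply F0) (y k - y0)" for k
    by (simp add: adj_diff adj_diff_arg)
  have "(\<lambda>k. norm (F k - F0) * norm (y k) + norm F0 * norm (y k - y0)) \<longlonglongrightarrow> 0 * norm y0 + norm F0 * 0"
    by (intro tendsto_intros) (use assms in \<open>auto simp: LIM_zero_iff tendsto_norm_zero_iff intro: LIM_zero\<close>)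
  then have z: "(\<lambda>k. norm (F k - F0) * norm (y k) + norm F0 * norm (y k - y0)) \<longlonglongrightarrow> 0" by simp
  have "(\<lambda>k. adjoint (blinfun_apply (F k)) (y k) - adjoint (blinfun_apply F0) y0) \<longlonglongrightarrow> 0"
  proof (rule tendsto_norm_zero_cancel, rule Lim_null_comparison[OF _ z])
    show "\<forall>\<^sub>F k in sequentially. norm (norm (adjoint (blinfun_apply (F k)) (y k) - adjoint (blinfun_apply F0) y0)) \<le> norm (F k - F0) * norm (y k) + norm F0 * norm (y k - y0)"
      unfolding e by (auto intro!: always_eventually norm_triangle_le add_mono adj_norm)
  qed
  then show ?thesis by (simp add: LIM_zero_iff)
qed



lemma reg_normal_scale:
  assumes "\<eta> \<in> reg_normal C z" "c \<ge> 0"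
  shows "c *\<^sub>R \<eta> \<in> reg_normal C z"
  unfolding reg_normal_def
proof (safe)
  show "z \<in> C" using assms unfolding reg_normal_def by auto
  fix e :: real assume e: "e > 0"
  define e' where "e' = e / (c + 1)"
  have e': "e' > 0" using e assms by (simp add: e'_def)
  obtain d where d: "d > 0" "\<forall>z'\<in>C. norm (z' - z) < d \<longrightarrow> \<eta> \<bullet> (z' - z) \<le> e' * norm (z' - z)"
    using assms(1) e' unfolding reg_normal_def by blast
  show "\<exists>d>0. \<forall>z'\<in>C. norm (z' - z) < d \<longrightarrow> c *\<^sub>R \<eta> \<bullet> (z' - z) \<le> e * norm (z' - z)"
  proof (intro exI[of _ d] conjI ballI impI)
    fix z' assume "z' \<in> C" "norm (z' - z) < d"
    then have h: "\<eta> \<bullet> (z' - z) \<le> e' * norm (z' - z)" using d by blast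
    have "c *\<^sub>R \<eta> \<bullet> (z' - z) = c * (\<eta> \<bullet> (z' - z))" by simp
    also have "\<dots> \<le> c * (e' * norm (z' - z))" using h assms(2) by (rule mult_left_mono)
    also have "\<dots> \<le> e * norm (z' - z)"
    proof -
      have "c * e' \<le> e" using e assms(2) by (simp add: e'_def field_simps)
      then show ?thesis by (metis mult.assoc mult_right_mono norm_ge_zero)
    qed
    finally show "c *\<^sub>R \<eta> \<bullet> (z' - z) \<le> e * norm (z' - z)" .
  qed (use d in auto)
qed

lemma reg_normal_mem: "\<eta> \<in> reg_normal C z \<Longrightarrow> z \<in> C"
  unfolding reg_normal_def by auto

lemma reg_sub_lim: "\<eta> \<in> reg_normal C z \<Longrightarrow> \<eta> \<in> lim_normal C z"
  unfolding lim_normal_def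
  by (rule CollectI, rule exI[of _ "\<lambda>_. z"], rule exI[of _ "\<lambda>_. \<eta>"]) (auto dest: reg_normal_mem)

lemma lim_normal_scale:
  assumes "\<eta> \<in> lim_normal C z" "c \<ge> 0"
  shows "c *\<^sub>R \<eta> \<in> lim_normal C z"
proof -
  obtain zk \<eta>k where h: "zk \<longlonglongrightarrow> z" "\<eta>k \<longlonglongrightarrow> \<eta>" "\<forall>k. zk k \<in> C \<and> \<eta>k k \<in> reg_normal C (zk k)"
    using assms unfolding lim_normal_def by blast
  show ?thesis unfolding lim_normal_def
    by (rule CollectI, rule exI[of _ zk], rule exI[of _ "\<lambda>k. c *\<^sub>R \<eta>k k"])
       (use h assms(2) in \<open>auto intro: tendsto_intros reg_normal_scale\<close>)
qed

lemma dir_normal_scale: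
  assumes "\<eta> \<in> dir_normal C z w" "c \<ge> 0"
  shows "c *\<^sub>R \<eta> \<in> dir_normal C z w"
proof -
  obtain tk wk \<eta>k where h: "\<forall>k. tk k > 0" "tk \<longlonglongrightarrow> 0" "wk \<longlonglongrightarrow> w" "\<eta>k \<longlonglongrightarrow> \<eta>"
     "\<forall>k. \<eta>k k \<in> reg_normal C (z + tk k *\<^sub>R wk k)"
    using assms unfolding dir_normal_def by blast
  show ?thesis unfolding dir_normal_def
    by (rule CollectI, rule exI[of _ tk], rule exI[of _ wk], rule exI[of _ "\<lambda>k. c *\<^sub>R \<eta>k k"])
       (use h assms(2) in \<open>auto intro: tendsto_intros reg_normal_scale\<close>)
qed

lemma gdn_scale:
  assumes "q \<in> graph_deriv_normal D y \<eta> w" "c \<ge> 0"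
  shows "c *\<^sub>R q \<in> graph_deriv_normal D y (c *\<^sub>R \<eta>) w"
proof -
  obtain tk vk where h: "\<forall>k. tk k > 0" "tk \<longlonglongrightarrow> 0" "vk \<longlonglongrightarrow> (w, q)"
     "\<forall>k. (y, \<eta>) + tk k *\<^sub>R vk k \<in> gph_normal D"
    using assms unfolding graph_deriv_normal_def tangent_cone_def by blast
  have m: "c *\<^sub>R \<eta> + tk k *\<^sub>R (c *\<^sub>R snd (vk k)) \<in> lim_normal D (y + tk k *\<^sub>R fst (vk k))" for k
  proof -
    have "\<eta> + tk k *\<^sub>R snd (vk k) \<in> lim_normal D (y + tk k *\<^sub>R fst (vk k))"
      using h(4)[rule_format, of k] by (cases "vk k") (auto simp: gph_normal_def)
    from lim_normal_scale[OF this assms(2)] show ?thesis by (simp add: algebra_simps)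
  qed
  have "(\<lambda>k. (fst (vk k), c *\<^sub>R snd (vk k))) \<longlonglongrightarrow> (w, c *\<^sub>R q)"
    using tendsto_fst[OF h(3)] tendsto_snd[OF h(3)] by (auto intro!: tendsto_intros)
  then show ?thesis unfolding graph_deriv_normal_def tangent_cone_def
    by (intro CollectI exI[of _ tk] exI[of _ "\<lambda>k. (fst (vk k), c *\<^sub>R snd (vk k))"])
       (use h m in \<open>auto simp: gph_normal_def\<close>)
qed



lemma rem_seq:
  fixes f :: "'a::real_normed_vector \<Rightarrow> 'b::real_normed_vector"
  assumes df: "(f has_derivative f') (at x)" and h: "h \<longlonglongrightarrow> 0"
    and hC: "\<And>k. norm (h k) \<le> C * s k" and sp: "\<And>k. s k > 0"
  shows "(\<lambda>k. norm (f (x + h k) - f x - f' (h k)) / s k) \<longlonglongrightarrow> 0"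
proof (rule LIMSEQ_I)
  fix r :: real assume r: "r > 0"
  define e where "e = r / (2 * (\<bar>C\<bar> + 1))"
  have e: "e > 0" using r by (simp add: e_def)
  obtain d where d: "d > 0" "\<And>y. norm (y - x) < d \<Longrightarrow> norm (f y - f x - f' (y - x)) \<le> e * norm (y - x)"
    using df e unfolding has_derivative_at_alt by blast
  obtain N where N: "\<And>k. k \<ge> N \<Longrightarrow> norm (h k) < d"
    using h d(1) unfolding LIMSEQ_iff by (metis diff_zero)
  show "\<exists>N. \<forall>k\<ge>N. norm (norm (f (x + h k) - f x - f' (h k)) / s k - 0) < r"
  proof (intro exI[of _ N] allI impI)
    fix k assume "k \<ge> N"
    then have "norm (f (x + h k) - f x - f' (h k)) \<le> e * norm (h k)"
      using d(2)[of "x + h k"] N by simp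
    also have "\<dots> \<le> e * (\<bar>C\<bar> * s k)"
    proof -
      have "C * s k \<le> \<bar>C\<bar> * s k" using sp[of k] by (simp add: mult_right_mono less_imp_le)
      then have "norm (h k) \<le> \<bar>C\<bar> * s k" using hC[of k] by linarith
      then show ?thesis using e by (simp add: mult_left_mono less_imp_le)
    qed
    finally have "norm (f (x + h k) - f x - f' (h k)) / s k \<le> e * \<bar>C\<bar>"
      using sp[of k] by (simp add: divide_le_eq mult.assoc)
    also have "\<dots> < r"
    proof -
      have "e * \<bar>C\<bar> = r * (\<bar>C\<bar> / (2 * (\<bar>C\<bar> + 1)))" by (simp add: e_def)
      moreover have "\<bar>C\<bar> / (2 * (\<bar>C\<bar> + 1)) < 1" by (simp add: divide_less_eq)
      ultimately show ?thesis using r by (metis mult.right_neutral mult_strict_left_mono)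
    qed
    finally show "norm (norm (f (x + h k) - f x - f' (h k)) / s k - 0) < r"
      using sp[of k] by simp
  qed
qed

lemma dir_quot:
  fixes f :: "'a::real_normed_vector \<Rightarrow> 'b::real_normed_vector"
  assumes df: "(f has_derivative f') (at x)" and tp: "\<And>k. t k > 0" and t0: "t \<longlonglongrightarrow> 0"
    and v: "v \<longlonglongrightarrow> v0"
  shows "(\<lambda>k. (1 / t k) *\<^sub>R (f (x + t k *\<^sub>R v k) - f x)) \<longlonglongrightarrow> f' v0"
proof -
  have bl: "bounded_linear f'" using df by (simp add: has_derivative_at_alt)
  obtain B where B: "B > 0" "\<And>k. norm (v k) \<le> B"
    using convergent_imp_bounded[OF v] unfolding bounded_pos by blast
  have h0: "(\<lambda>k. t k *\<^sub>R v k) \<longlonglongrightarrow> 0"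
    using tendsto_scaleR[OF t0 v] by simp
  have r: "(\<lambda>k. norm (f (x + t k *\<^sub>R v k) - f x - f' (t k *\<^sub>R v k)) / t k) \<longlonglongrightarrow> 0"
    by (rule rem_seq[OF df h0, of B]) (use B tp in \<open>auto simp: mult.commute abs_of_pos intro!: mult_left_mono less_imp_le\<close>)
  have eq: "(1 / t k) *\<^sub>R (f (x + t k *\<^sub>R v k) - f x) =
      (1 / t k) *\<^sub>R (f (x + t k *\<^sub>R v k) - f x - f' (t k *\<^sub>R v k)) + f' (v k)" for k
    using tp[of k] by (simp add: linear_simps[OF bl] algebra_simps)
  have "(\<lambda>k. (1 / t k) *\<^sub>R (f (x + t k *\<^sub>R v k) - f x - f' (t k *\<^sub>R v k))) \<longlonglongrightarrow> 0"
  proof (rule tendsto_norm_zero_cancel)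
    have e2: "norm ((1 / t k) *\<^sub>R Z) = norm Z / t k" for k and Z :: 'b
      using tp[of k] by simp
    show "(\<lambda>k. norm ((1 / t k) *\<^sub>R (f (x + t k *\<^sub>R v k) - f x - f' (t k *\<^sub>R v k)))) \<longlonglongrightarrow> 0"
      unfolding e2 by (rule r)
  qed
  moreover have "(\<lambda>k. f' (v k)) \<longlonglongrightarrow> f' v0"
    using bounded_linear.tendsto[OF bl v] .
  ultimately show ?thesis unfolding eq using tendsto_add by fastforce
qed



lemma small_inner_zero:
  fixes v :: "'a::real_inner"
  assumes "\<And>e. e > 0 \<Longrightarrow> \<exists>d>0. \<forall>h. norm h < d \<longrightarrow> v \<bullet> h \<le> e * norm h"
  shows "v = 0"
proof (rule ccontr)
  assume v: "v \<noteq> 0"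
  then have nv: "norm v > 0" by simp
  have nv2: "norm v / 2 > 0" using nv by simp
  obtain d where d: "d > 0" "\<forall>h. norm h < d \<longrightarrow> v \<bullet> h \<le> (norm v / 2) * norm h"
    using assms[OF nv2] by blast
  define h where "h = (d / (2 * norm v)) *\<^sub>R v"
  have nh: "norm h = d / 2" using nv d(1) by (simp add: h_def)
  have vv: "v \<bullet> v = norm v * norm v" by (simp add: dot_square_norm power2_eq_square)
  have "v \<bullet> h = (d / (2 * norm v)) * (v \<bullet> v)" by (simp add: h_def)
  also have "\<dots> = d * norm v / 2" unfolding vv using nv by (simp add: field_simps)
  finally have vh: "v \<bullet> h = d * norm v / 2" .
  have "v \<bullet> h \<le> (norm v / 2) * norm h" using d nh by simp
  then have "d * norm v / 2 \<le> (norm v / 2) * (d / 2)" using nh vh by simp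
  moreover have "d * norm v > 0" using nv d(1) by simp
  moreover have "(norm v / 2) * (d / 2) = (d * norm v) / 4" by simp
  moreover have "\<And>x::real. x > 0 \<Longrightarrow> x / 2 \<le> x / 4 \<Longrightarrow> False" by linarith
  ultimately show False by metis
qed



lemma reg_to_G:
  fixes g :: "'a::euclidean_space \<Rightarrow> 'b::euclidean_space"
  assumes dg: "(g has_derivative blinfun_apply A) (at x)"
    and l: "l \<in> reg_normal D (g x - y)"
  shows "(adjoint (blinfun_apply A) l, - l) \<in> reg_normal (gph_Phi g D) (x, y)"
  unfolding reg_normal_def
proof (safe)
  show "(x, y) \<in> gph_Phi g D" using reg_normal_mem[OF l] by (simp add: gph_Phi_def)
  fix e :: real assume e: "e > 0"
  define K where "K = norm A + 2"
  have K: "K > 0" "K \<ge> 1" unfolding K_def using norm_ge_zero[of A] by linarith+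
  define e1 where "e1 = e / (2 * K)"
  have e1: "e1 > 0" using e K by (simp add: e1_def)
  obtain d1 where d1: "d1 > 0" "\<forall>z'\<in>D. norm (z' - (g x - y)) < d1 \<longrightarrow> l \<bullet> (z' - (g x - y)) \<le> e1 * norm (z' - (g x - y))"
    using l e1 unfolding reg_normal_def by blast
  define e2 where "e2 = min 1 (e / (2 * (norm l + 1)))"
  have lp: "norm l + 1 > 0" using norm_ge_zero[of l] by linarith
  have qp: "e / (2 * (norm l + 1)) > 0" using e lp by simp
  have e2: "e2 > 0" "e2 \<le> 1" using qp by (simp_all add: e2_def)
  have e2': "e2 * norm l \<le> e / 2"
  proof -
    have "e2 \<le> e / (2 * (norm l + 1))" by (simp add: e2_def)
    then have "e2 * (norm l + 1) \<le> e / (2 * (norm l + 1)) * (norm l + 1)"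
      by (rule mult_right_mono) (use lp in simp)
    also have "\<dots> = e / 2" using lp by (simp add: field_simps)
    finally have "e2 * (norm l + 1) \<le> e / 2" .
    moreover have "e2 * (norm l + 1) = e2 * norm l + e2" by (simp add: algebra_simps)
    ultimately show ?thesis using e2 by linarith
  qed
  obtain d2 where d2: "d2 > 0" "\<And>x'. norm (x' - x) < d2 \<Longrightarrow> norm (g x' - g x - A (x' - x)) \<le> e2 * norm (x' - x)"
    using dg e2(1) unfolding has_derivative_at_alt by blast
  define \<delta> where "\<delta> = min d2 (d1 / K)"
  have \<delta>: "\<delta> > 0" using d1 d2 K by (simp add: \<delta>_def)
  show "\<exists>d>0. \<forall>z'\<in>gph_Phi g D. norm (z' - (x, y)) < d \<longrightarrow>
      (adjoint (blinfun_apply A) l, - l) \<bullet> (z' - (x, y)) \<le> e * norm (z' - (x, y))"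
  proof (intro exI[of _ \<delta>] conjI ballI impI \<delta>)
    fix z' assume zG: "z' \<in> gph_Phi g D" and zn: "norm (z' - (x, y)) < \<delta>"
    obtain x' y' where z': "z' = (x', y')" by (cases z')
    define p where "p = x' - x"
    define q where "q = y' - y"
    define n where "n = norm (z' - (x, y))"
    have pn: "norm p \<le> n" and qn: "norm q \<le> n"
      using norm_fst_le[of p q] norm_snd_le[of q p] by (simp_all add: n_def z' p_def q_def)
    have nd: "n < \<delta>" using zn by (simp add: n_def)
    define r where "r = g x' - g x - A p"
    have rn: "norm r \<le> e2 * norm p"
      using d2(2)[of x'] pn nd by (simp add: r_def p_def \<delta>_def)
    have dd: "(g x' - y') - (g x - y) = A p + r - q" by (simp add: r_def q_def)
    have "norm (A p + r - q) \<le> norm (A p) + norm r + norm q"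
      using norm_triangle_ineq4[of "A p + r" q] norm_triangle_ineq[of "A p" r] by linarith
    also have "\<dots> \<le> norm A * norm p + norm p + norm q"
      using norm_blinfun[of A p] rn mult_right_mono[OF e2(2) norm_ge_zero[of p]] by linarith
    also have "\<dots> \<le> K * n"
    proof -
      have "norm A * norm p \<le> norm A * n" by (rule mult_left_mono[OF pn norm_ge_zero])
      moreover have "K * n = norm A * n + 2 * n" by (simp add: K_def algebra_simps)
      ultimately show ?thesis using pn qn by linarith
    qed
    finally have ddn: "norm ((g x' - y') - (g x - y)) \<le> K * n" unfolding dd .
    have "n < d1 / K" using nd by (simp add: \<delta>_def)
    then have "K * n < K * (d1 / K)" using K(1) by (rule mult_strict_left_mono)
    then have "K * n < d1" using K(1) by simp
    then have dn: "norm ((g x' - y') - (g x - y)) < d1" using ddn by linarith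
    have dD': "g x' - y' \<in> D" using zG by (simp add: z' gph_Phi_def)
    have "l \<bullet> ((g x' - y') - (g x - y)) \<le> e1 * norm ((g x' - y') - (g x - y))"
      using d1(2) dD' dn by blast
    also have "\<dots> \<le> e1 * (K * n)" using ddn e1 by (simp add: mult_left_mono)
    also have "\<dots> = e / 2 * n" using K by (simp add: e1_def)
    finally have i1: "l \<bullet> (A p + r - q) \<le> e / 2 * n" unfolding dd .
    have i2: "- (l \<bullet> r) \<le> e / 2 * n"
    proof -
      have "- (l \<bullet> r) \<le> norm l * norm r" using Cauchy_Schwarz_ineq2[of l r] by linarith
      also have "\<dots> \<le> norm l * (e2 * norm p)" by (simp add: mult_left_mono rn)
      also have "\<dots> \<le> e / 2 * norm p" proof -
        have "norm l * (e2 * norm p) = (e2 * norm l) * norm p" by (simp add: algebra_simps)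
        then show ?thesis using mult_right_mono[OF e2' norm_ge_zero[of p]] by linarith
      qed
      also have "\<dots> \<le> e / 2 * n" using pn e by simp
      finally show ?thesis .
    qed
    have aw: "adjoint (blinfun_apply A) l \<bullet> p = l \<bullet> A p"
      using adj_works[of p A l] by (simp only: inner_commute)
    have zxy: "z' - (x, y) = (p, q)" by (simp add: z' p_def q_def)
    have "(adjoint (blinfun_apply A) l, - l) \<bullet> (z' - (x, y)) = l \<bullet> (A p) - l \<bullet> q"
      unfolding zxy inner_Pair aw by simp
    also have "\<dots> = l \<bullet> (A p + r - q) - l \<bullet> r" by (simp add: inner_add_right inner_diff_right)
    also have "\<dots> \<le> e * n" using i1 i2 by simp
    finally show "(adjoint (blinfun_apply A) l, - l) \<bullet> (z' - (x, y)) \<le> e * norm (z' - (x, y))"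
      by (simp add: n_def)
  qed
qed



lemma G_to_reg:
  fixes g :: "'a::euclidean_space \<Rightarrow> 'b::euclidean_space"
  assumes dg: "(g has_derivative blinfun_apply A) (at x)"
    and h: "(xs, - l) \<in> reg_normal (gph_Phi g D) (x, y)"
  shows "l \<in> reg_normal D (g x - y) \<and> xs = adjoint (blinfun_apply A) l"
proof
  have xyG: "(x, y) \<in> gph_Phi g D" using reg_normal_mem[OF h] .
  then have dD: "g x - y \<in> D" by (simp add: gph_Phi_def)
  show "l \<in> reg_normal D (g x - y)"
    unfolding reg_normal_def
  proof (safe intro!: dD)
    fix e :: real assume e: "e > 0"
    obtain d where d: "d > 0" "\<forall>z'\<in>gph_Phi g D. norm (z' - (x, y)) < d \<longrightarrow> (xs, - l) \<bullet> (z' - (x, y)) \<le> e * norm (z' - (x, y))"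
      using h e unfolding reg_normal_def by blast
    show "\<exists>d>0. \<forall>z'\<in>D. norm (z' - (g x - y)) < d \<longrightarrow> l \<bullet> (z' - (g x - y)) \<le> e * norm (z' - (g x - y))"
    proof (intro exI[of _ d] conjI ballI impI d(1))
      fix z' assume z': "z' \<in> D" "norm (z' - (g x - y)) < d"
      have G: "(x, g x - z') \<in> gph_Phi g D" using z' by (simp add: gph_Phi_def)
      have eqp: "(x, g x - z') - (x, y) = (0, - (z' - (g x - y)))" by simp
      have nn: "norm ((x, g x - z') - (x, y)) = norm (z' - (g x - y))"
        unfolding eqp by (simp only: norm_Pair1 norm_minus_cancel)
      have "(xs, - l) \<bullet> ((x, g x - z') - (x, y)) \<le> e * norm ((x, g x - z') - (x, y))"
        using d(2) G z'(2) nn by auto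
      then show "l \<bullet> (z' - (g x - y)) \<le> e * norm (z' - (g x - y))"
        unfolding nn unfolding eqp by (simp add: inner_diff_right)
    qed
  qed
  show "xs = adjoint (blinfun_apply A) l"
  proof -
    define v where "v = xs - adjoint (blinfun_apply A) l"
    have "v = 0"
    proof (rule small_inner_zero)
      fix e :: real assume e: "e > 0"
      define K where "K = norm A + 2"
      have K: "K > 0" "K \<ge> 1" unfolding K_def using norm_ge_zero[of A] by linarith+
      define e1 where "e1 = e / (2 * K)"
      have e1: "e1 > 0" using e K by (simp add: e1_def)
      obtain d1 where d1: "d1 > 0" "\<forall>z'\<in>gph_Phi g D. norm (z' - (x, y)) < d1 \<longrightarrow> (xs, - l) \<bullet> (z' - (x, y)) \<le> e1 * norm (z' - (x, y))"
        using h e1 unfolding reg_normal_def by blast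
      define e2 where "e2 = min 1 (e / (2 * (norm l + 1)))"
      have lp: "norm l + 1 > 0" using norm_ge_zero[of l] by linarith
      have qp: "e / (2 * (norm l + 1)) > 0" using e lp by simp
      have e2: "e2 > 0" "e2 \<le> 1" using qp by (simp_all add: e2_def)
      have e2': "e2 * norm l \<le> e / 2"
      proof -
        have "e2 \<le> e / (2 * (norm l + 1))" by (simp add: e2_def)
        then have "e2 * (norm l + 1) \<le> e / (2 * (norm l + 1)) * (norm l + 1)"
          by (rule mult_right_mono) (use lp in simp)
        also have "\<dots> = e / 2" using lp by (simp add: field_simps)
        finally have "e2 * (norm l + 1) \<le> e / 2" .
        moreover have "e2 * (norm l + 1) = e2 * norm l + e2" by (simp add: algebra_simps)
        ultimately show ?thesis using e2 by linarith
      qed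
      obtain d2 where d2: "d2 > 0" "\<And>x'. norm (x' - x) < d2 \<Longrightarrow> norm (g x' - g x - A (x' - x)) \<le> e2 * norm (x' - x)"
        using dg e2(1) unfolding has_derivative_at_alt by blast
      define \<delta> where "\<delta> = min d2 (d1 / K)"
      have \<delta>: "\<delta> > 0" using d1 d2 K by (simp add: \<delta>_def)
      show "\<exists>d>0. \<forall>h. norm h < d \<longrightarrow> v \<bullet> h \<le> e * norm h"
      proof (intro exI[of _ \<delta>] conjI allI impI \<delta>)
        fix p :: 'a assume pn: "norm p < \<delta>"
        define r where "r = g (x + p) - g x - A p"
        have rn: "norm r \<le> e2 * norm p"
          using d2(2)[of "x + p"] pn by (simp add: r_def \<delta>_def)
        define z' where "z' = (x + p, y + (g (x + p) - g x))"
        have G: "z' \<in> gph_Phi g D" using dD by (simp add: z'_def gph_Phi_def)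
        have zd: "z' - (x, y) = (p, A p + r)" by (simp add: z'_def r_def)
        have "norm (z' - (x, y)) \<le> norm p + norm (A p + r)" unfolding zd by (rule norm_Pair_le)
        also have "\<dots> \<le> norm p + (norm A * norm p + norm r)"
          using norm_triangle_ineq[of "A p" r] norm_blinfun[of A p] by linarith
        also have "\<dots> \<le> K * norm p"
          using rn mult_right_mono[OF e2(2) norm_ge_zero[of p]] by (simp add: K_def algebra_simps)
        finally have zn: "norm (z' - (x, y)) \<le> K * norm p" .
        have "norm p < d1 / K" using pn by (simp add: \<delta>_def)
        then have "K * norm p < K * (d1 / K)" using K(1) by (rule mult_strict_left_mono)
        then have "K * norm p < d1" using K(1) by simp
        then have "(xs, - l) \<bullet> (z' - (x, y)) \<le> e1 * norm (z' - (x, y))"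
          using d1(2) G zn by auto
        also have "\<dots> \<le> e1 * (K * norm p)" using zn e1 by (simp add: mult_left_mono)
        also have "\<dots> = e / 2 * norm p" using K by (simp add: e1_def)
        finally have i1: "xs \<bullet> p - l \<bullet> (A p + r) \<le> e / 2 * norm p" unfolding zd by simp
        have i2: "l \<bullet> r \<le> e / 2 * norm p"
        proof -
          have "l \<bullet> r \<le> norm l * norm r" using Cauchy_Schwarz_ineq2[of l r] by linarith
          also have "\<dots> \<le> norm l * (e2 * norm p)" by (simp add: mult_left_mono rn)
          also have "\<dots> \<le> e / 2 * norm p" proof -
        have "norm l * (e2 * norm p) = (e2 * norm l) * norm p" by (simp add: algebra_simps)
        then show ?thesis using mult_right_mono[OF e2' norm_ge_zero[of p]] by linarith
      qed
          finally show ?thesis .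
        qed
        have aw: "adjoint (blinfun_apply A) l \<bullet> p = l \<bullet> A p"
          using adj_works[of p A l] by (simp only: inner_commute)
        have "v \<bullet> p = xs \<bullet> p - l \<bullet> (A p)"
          by (simp only: v_def inner_diff_left aw)
        also have "\<dots> = (xs \<bullet> p - l \<bullet> (A p + r)) + l \<bullet> r" by (simp add: inner_add_right)
        also have "\<dots> \<le> e * norm p" using i1 i2 by simp
        finally show "v \<bullet> p \<le> e * norm p" .
      qed
    qed
    then show ?thesis by (simp add: v_def)
  qed
qed



lemma lim_to_G:
  fixes g :: "'a::euclidean_space \<Rightarrow> 'b::euclidean_space"
  assumes dg: "(g has_derivative blinfun_apply A) (at xb)"
    and l: "l \<in> lim_normal D (g xb)"
  shows "(adjoint (blinfun_apply A) l, - l) \<in> lim_normal (gph_Phi g D) (xb, 0)"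
proof -
  obtain zk \<eta>k where h: "zk \<longlonglongrightarrow> g xb" "\<eta>k \<longlonglongrightarrow> l" "\<forall>k. zk k \<in> D \<and> \<eta>k k \<in> reg_normal D (zk k)"
    using l unfolding lim_normal_def by blast
  have m: "(adjoint (blinfun_apply A) (\<eta>k k), - \<eta>k k) \<in> reg_normal (gph_Phi g D) (xb, g xb - zk k)" for k
    using reg_to_G[OF dg, of "\<eta>k k" D "g xb - zk k"] h(3) by simp
  have c1: "(\<lambda>k. (xb, g xb - zk k)) \<longlonglongrightarrow> (xb, 0)"
    using h(1) by (auto intro!: tendsto_eq_intros)
  have c2: "(\<lambda>k. (adjoint (blinfun_apply A) (\<eta>k k), - \<eta>k k)) \<longlonglongrightarrow> (adjoint (blinfun_apply A) l, - l)"
    using adj_tendsto[OF tendsto_const h(2)] h(2) by (auto intro!: tendsto_intros)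
  have "\<exists>zk \<eta>k. zk \<longlonglongrightarrow> (xb, 0) \<and> \<eta>k \<longlonglongrightarrow> (adjoint (blinfun_apply A) l, - l) \<and>
     (\<forall>k. zk k \<in> gph_Phi g D \<and> \<eta>k k \<in> reg_normal (gph_Phi g D) (zk k))"
    using c1 c2 m reg_normal_mem by blast
  then show ?thesis unfolding lim_normal_def by blast
qed

lemma dir_to_G:
  fixes g :: "'a::euclidean_space \<Rightarrow> 'b::euclidean_space"
  assumes dg: "\<And>x. (g has_derivative blinfun_apply (gd x)) (at x)"
    and cgd: "isCont gd xb"
    and l: "l \<in> dir_normal D (g xb) (gd xb u)"
  shows "(adjoint (blinfun_apply (gd xb)) l, - l) \<in> dir_normal (gph_Phi g D) (xb, 0) (u, 0)"
proof -
  obtain tk wk \<eta>k where h: "\<forall>k. tk k > 0" "tk \<longlonglongrightarrow> 0" "wk \<longlonglongrightarrow> gd xb u" "\<eta>k \<longlonglongrightarrow> l"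
     "\<forall>k. \<eta>k k \<in> reg_normal D (g xb + tk k *\<^sub>R wk k)"
    using l unfolding dir_normal_def by blast
  have tp: "\<And>k. tk k > 0" using h(1) by blast
  define vk where "vk k = (1 / tk k) *\<^sub>R (g (xb + tk k *\<^sub>R u) - g xb) - wk k" for k
  have vk0: "vk \<longlonglongrightarrow> 0"
  proof -
    have "(\<lambda>k. (1 / tk k) *\<^sub>R (g (xb + tk k *\<^sub>R u) - g xb)) \<longlonglongrightarrow> gd xb u"
      using dir_quot[OF dg tp h(2) tendsto_const[of u]] by simp
    from tendsto_diff[OF this h(3)] show ?thesis by (simp add: vk_def[abs_def])
  qed
  have pt: "g (xb + tk k *\<^sub>R u) - tk k *\<^sub>R vk k = g xb + tk k *\<^sub>R wk k" for k
    using h(1) by (simp add: vk_def algebra_simps)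
  have m: "(adjoint (blinfun_apply (gd (xb + tk k *\<^sub>R u))) (\<eta>k k), - \<eta>k k) \<in>
      reg_normal (gph_Phi g D) ((xb, 0) + tk k *\<^sub>R (u, vk k))" for k
    using reg_to_G[OF dg, of "\<eta>k k" D "xb + tk k *\<^sub>R u" "tk k *\<^sub>R vk k"] h(5) pt by simp
  have cg: "(\<lambda>k. gd (xb + tk k *\<^sub>R u)) \<longlonglongrightarrow> gd xb"
  proof -
    have "(\<lambda>k. xb + tk k *\<^sub>R u) \<longlonglongrightarrow> xb" using tendsto_scaleR[OF h(2) tendsto_const[of u]]
      using tendsto_add[OF tendsto_const[of xb]] by fastforce
    then show ?thesis using isCont_tendsto_compose[OF cgd] by blast
  qed
  have c2: "(\<lambda>k. (adjoint (blinfun_apply (gd (xb + tk k *\<^sub>R u))) (\<eta>k k), - \<eta>k k)) \<longlonglongrightarrow> (adjoint (blinfun_apply (gd xb)) l, - l)"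
    using adj_tendsto[OF cg h(4)] h(4) by (auto intro!: tendsto_intros)
  have c1: "(\<lambda>k. (u, vk k)) \<longlonglongrightarrow> (u, 0)" using vk0 by (auto intro!: tendsto_intros)
  have "\<exists>tk wk \<eta>k. (\<forall>k. tk k > 0) \<and> tk \<longlonglongrightarrow> 0 \<and> wk \<longlonglongrightarrow> (u, 0) \<and>
      \<eta>k \<longlonglongrightarrow> (adjoint (blinfun_apply (gd xb)) l, - l) \<and>
      (\<forall>k. \<eta>k k \<in> reg_normal (gph_Phi g D) ((xb, 0) + tk k *\<^sub>R wk k))"
    using c1 c2 m h(1,2) by blast
  then show ?thesis unfolding dir_normal_def by blast
qed



lemma gdn_intro:
  assumes "\<forall>k. tk k > 0" "tk \<longlonglongrightarrow> 0" "vk \<longlonglongrightarrow> (w, q)" "\<forall>k. (y, \<eta>) + tk k *\<^sub>R vk k \<in> gph_normal D"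
  shows "q \<in> graph_deriv_normal D y \<eta> w"
  unfolding graph_deriv_normal_def tangent_cone_def using assms by blast

lemma Dsub_intro:
  assumes "norm q = 1" "wk \<longlonglongrightarrow> w" "qk \<longlonglongrightarrow> q" "\<forall>k. tk k > 0 \<and> \<tau>k k > 0" "tk \<longlonglongrightarrow> 0" "\<tau>k \<longlonglongrightarrow> 0"
    "filterlim (\<lambda>k. \<tau>k k / tk k) at_top sequentially"
    "\<forall>k. ys + \<tau>k k *\<^sub>R qk k \<in> lim_normal D (y + tk k *\<^sub>R wk k)"
  shows "q \<in> Dsub_normal D y ys w"
  unfolding Dsub_normal_def using assms by blast

lemma core:
  fixes D :: "'b::euclidean_space set" and L :: "'b \<Rightarrow> 'a::euclidean_space"
  assumes L: "linear L" and tp: "\<And>k. t k > 0" and t0: "t \<longlonglongrightarrow> 0" and w: "w \<longlonglongrightarrow> w0"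
    and mu: "\<mu> \<longlonglongrightarrow> \<eta>"
    and mem: "\<And>k. \<mu> k \<in> lim_normal D (y0 + t k *\<^sub>R w k)"
    and Lz: "(\<lambda>k. L ((1 / t k) *\<^sub>R (\<mu> k - \<eta>))) \<longlonglongrightarrow> v"
    and Q: "(\<forall>\<zeta>. L \<zeta> = 0 \<longrightarrow> \<zeta> \<in> graph_deriv_normal D y0 \<eta> 0 \<longrightarrow> \<zeta> = 0) \<or>
            (w0 \<noteq> 0 \<and> (\<forall>\<zeta>. L \<zeta> = 0 \<longrightarrow> \<zeta> \<notin> Dsub_normal D y0 \<eta> ((1 / norm w0) *\<^sub>R w0)))"
  shows "\<exists>z. z \<in> graph_deriv_normal D y0 \<eta> w0 \<and> L z = v"
proof -
  have bl: "bounded_linear L" using L by (simp add: linear_conv_bounded_linear)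
  define z where "z k = (1 / t k) *\<^sub>R (\<mu> k - \<eta>)" for k
  define \<rho> where "\<rho> k = max 1 (norm (z k))" for k
  have rp: "\<rho> k \<ge> 1" for k by (simp add: \<rho>_def)
  have rp0: "\<rho> k > 0" for k using rp[of k] by linarith
  define \<zeta> where "\<zeta> k = (1 / \<rho> k) *\<^sub>R z k" for k
  have z\<zeta>: "z k = \<rho> k *\<^sub>R \<zeta> k" for k using rp0[of k] by (simp add: \<zeta>_def)
  have n\<zeta>: "norm (\<zeta> k) \<le> 1" for k
  proof -
    have "norm (\<zeta> k) = norm (z k) / \<rho> k" using rp0[of k] by (simp add: \<zeta>_def)
    also have "\<dots> \<le> 1" using rp0[of k] by (simp add: \<rho>_def)
    finally show ?thesis .
  qed
  have mz: "\<mu> k = \<eta> + t k *\<^sub>R z k" for k using tp[of k] by (simp add: z_def)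
  define P where "P k = (\<zeta> k, 1 / \<rho> k)" for k
  have "bounded (range P)"
  proof -
    have "norm (P k) \<le> 2" for k
    proof -
      have "norm (P k) \<le> norm (\<zeta> k) + norm (1 / \<rho> k)" unfolding P_def by (rule norm_Pair_le)
      moreover have "norm (1 / \<rho> k) \<le> 1" using rp[of k] by simp
      ultimately show ?thesis using n\<zeta>[of k] by linarith
    qed
    then show ?thesis unfolding bounded_iff by blast
  qed
  then obtain r l where r: "strict_mono r" and Pl: "(P \<circ> r) \<longlonglongrightarrow> l"
    using bounded_imp_convergent_subsequence by blast
  obtain \<zeta>0 s where l: "l = (\<zeta>0, s)" by (cases l)
  have zr: "(\<lambda>k. \<zeta> (r k)) \<longlonglongrightarrow> \<zeta>0" using tendsto_fst[OF Pl] by (simp add: l P_def o_def)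
  have sr: "(\<lambda>k. 1 / \<rho> (r k)) \<longlonglongrightarrow> s" using tendsto_snd[OF Pl] by (simp add: l P_def o_def)
  have s0: "s \<ge> 0"
    by (rule LIMSEQ_le_const[OF sr]) (use rp0 in \<open>auto simp: less_imp_le\<close>)
  have tr: "(\<lambda>k. t (r k)) \<longlonglongrightarrow> 0" using LIMSEQ_subseq_LIMSEQ[OF t0 r] by (simp add: o_def)
  have wr: "(\<lambda>k. w (r k)) \<longlonglongrightarrow> w0" using LIMSEQ_subseq_LIMSEQ[OF w r] by (simp add: o_def)
  have mur: "(\<lambda>k. \<mu> (r k)) \<longlonglongrightarrow> \<eta>" using LIMSEQ_subseq_LIMSEQ[OF mu r] by (simp add: o_def)
  have Lzr: "(\<lambda>k. L (z (r k))) \<longlonglongrightarrow> v" using LIMSEQ_subseq_LIMSEQ[OF Lz r] by (simp add: o_def z_def)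
  have gmem: "(y0, \<eta>) + a *\<^sub>R (b, c) \<in> gph_normal D \<longleftrightarrow> \<eta> + a *\<^sub>R c \<in> lim_normal D (y0 + a *\<^sub>R b)" for a b c
    by (simp add: gph_normal_def)
  show ?thesis
  proof (cases "s > 0")
    case True
    define Z where "Z = (1 / s) *\<^sub>R \<zeta>0"
    have "(\<lambda>k. (1 / (1 / \<rho> (r k))) *\<^sub>R \<zeta> (r k)) \<longlonglongrightarrow> Z"
      unfolding Z_def using True by (intro tendsto_intros sr zr) simp
    then have zZ: "(\<lambda>k. z (r k)) \<longlonglongrightarrow> Z" by (simp add: z\<zeta>)
    have "Z \<in> graph_deriv_normal D y0 \<eta> w0"
    proof -
      have "(\<lambda>k. (w (r k), z (r k))) \<longlonglongrightarrow> (w0, Z)" using wr zZ by (rule tendsto_Pair)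
      moreover have "\<forall>k. (y0, \<eta>) + t (r k) *\<^sub>R (w (r k), z (r k)) \<in> gph_normal D"
        unfolding gmem using mem mz by metis
      ultimately show ?thesis using tp tr by (intro gdn_intro) auto
    qed
    moreover have "L Z = v"
    proof -
      have "(\<lambda>k. L (z (r k))) \<longlonglongrightarrow> L Z" by (rule bounded_linear.tendsto[OF bl zZ])
      then show ?thesis using Lzr LIMSEQ_unique by blast
    qed
    ultimately show ?thesis by blast
  next
    case False
    then have s00: "s = 0" using s0 by simp
    have Lz0: "L \<zeta>0 = 0"
    proof -
      have "(\<lambda>k. L (\<zeta> (r k))) \<longlonglongrightarrow> L \<zeta>0" by (rule bounded_linear.tendsto[OF bl zr])
      moreover have "(\<lambda>k. (1 / \<rho> (r k)) *\<^sub>R L (z (r k))) \<longlonglongrightarrow> 0 *\<^sub>R v"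
        using sr Lzr s00 by (intro tendsto_intros) auto
      moreover have "(1 / \<rho> (r k)) *\<^sub>R L (z (r k)) = L (\<zeta> (r k))" for k
        by (simp add: \<zeta>_def linear_simps[OF bl])
      ultimately show ?thesis using LIMSEQ_unique by fastforce
    qed
    have ev: "eventually (\<lambda>k. 1 / \<rho> (r k) < 1) sequentially"
      using sr s00 by (auto simp: order_tendsto_iff)
    have nz0: "norm \<zeta>0 = 1"
    proof -
      have "eventually (\<lambda>k. norm (\<zeta> (r k)) = 1) sequentially"
      proof (rule eventually_mono[OF ev])
        fix k assume "1 / \<rho> (r k) < 1"
        then have "\<rho> (r k) > 1" using rp0[of "r k"] by (simp add: divide_less_eq)
        then have "\<rho> (r k) = norm (z (r k))" by (simp add: \<rho>_def max_def split: if_splits)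
        then show "norm (\<zeta> (r k)) = 1" using rp0[of "r k"] \<open>\<rho> (r k) > 1\<close> by (simp add: \<zeta>_def)
      qed
      then have "(\<lambda>k. norm (\<zeta> (r k))) \<longlonglongrightarrow> 1" by (rule tendsto_eventually)
      moreover have "(\<lambda>k. norm (\<zeta> (r k))) \<longlonglongrightarrow> norm \<zeta>0" by (rule tendsto_norm[OF zr])
      ultimately show ?thesis using LIMSEQ_unique by metis
    qed
    define \<tau> where "\<tau> k = t (r k) * \<rho> (r k)" for k
    have \<tau>p: "\<tau> k > 0" for k using tp rp0 by (simp add: \<tau>_def)
    have \<tau>0: "\<tau> \<longlonglongrightarrow> 0"
    proof -
      have eq: "\<tau> k = max (t (r k)) (norm (\<mu> (r k) - \<eta>))" for k
      proof -
        have "t (r k) * norm (z (r k)) = norm (\<mu> (r k) - \<eta>)" using tp[of "r k"] by (simp add: z_def)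
        then show ?thesis using tp[of "r k"] by (simp add: \<tau>_def \<rho>_def max_mult_distrib_left)
      qed
      have "(\<lambda>k. norm (\<mu> (r k) - \<eta>)) \<longlonglongrightarrow> 0" using mur by (simp add: LIM_zero_iff tendsto_norm_zero_iff)
      from tendsto_max[OF tr this] show ?thesis unfolding eq[abs_def] by simp
    qed
    have \<tau>mem: "\<eta> + \<tau> k *\<^sub>R \<zeta> (r k) = \<mu> (r k)" for k
      using rp0[of "r k"] by (simp add: \<tau>_def mz z\<zeta>)
    from Q show ?thesis
    proof
      assume Q2: "\<forall>\<zeta>. L \<zeta> = 0 \<longrightarrow> \<zeta> \<in> graph_deriv_normal D y0 \<eta> 0 \<longrightarrow> \<zeta> = 0"
      have "\<zeta>0 \<in> graph_deriv_normal D y0 \<eta> 0"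
      proof -
        have "(\<lambda>k. ((1 / \<rho> (r k)) *\<^sub>R w (r k), \<zeta> (r k))) \<longlonglongrightarrow> (0 *\<^sub>R w0, \<zeta>0)"
          using sr wr zr s00 by (intro tendsto_intros) auto
        then have c: "(\<lambda>k. ((1 / \<rho> (r k)) *\<^sub>R w (r k), \<zeta> (r k))) \<longlonglongrightarrow> (0, \<zeta>0)" by simp
        have "\<forall>k. (y0, \<eta>) + \<tau> k *\<^sub>R ((1 / \<rho> (r k)) *\<^sub>R w (r k), \<zeta> (r k)) \<in> gph_normal D"
        proof
          fix k
          have eq: "\<tau> k *\<^sub>R ((1 / \<rho> (r k)) *\<^sub>R w (r k)) = t (r k) *\<^sub>R w (r k)"
            using rp0[of "r k"] by (simp add: \<tau>_def)
          show "(y0, \<eta>) + \<tau> k *\<^sub>R ((1 / \<rho> (r k)) *\<^sub>R w (r k), \<zeta> (r k)) \<in> gph_normal D"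
            unfolding gmem \<tau>mem eq by (rule mem)
        qed
        then show ?thesis using \<tau>p \<tau>0 c by (intro gdn_intro) auto
      qed
      then have "\<zeta>0 = 0" using Q2 Lz0 by blast
      then show ?thesis using nz0 by simp
    next
      assume Q3: "w0 \<noteq> 0 \<and> (\<forall>\<zeta>. L \<zeta> = 0 \<longrightarrow> \<zeta> \<notin> Dsub_normal D y0 \<eta> ((1 / norm w0) *\<^sub>R w0))"
      then have w00: "w0 \<noteq> 0" and nw: "norm w0 > 0" by auto
      have "\<zeta>0 \<in> Dsub_normal D y0 \<eta> ((1 / norm w0) *\<^sub>R w0)"
      proof -
        define wk where "wk k = (1 / norm w0) *\<^sub>R w (r k)" for k
        define tk where "tk k = t (r k) * norm w0" for k
        have c1: "wk \<longlonglongrightarrow> (1 / norm w0) *\<^sub>R w0" unfolding wk_def by (intro tendsto_intros wr)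
        have c2: "\<forall>k. tk k > 0 \<and> \<tau> k > 0" using tp \<tau>p nw by (simp add: tk_def)
        have c3: "tk \<longlonglongrightarrow> 0" unfolding tk_def using tendsto_mult[OF tr tendsto_const[of "norm w0"]] by simp
        have c4: "filterlim (\<lambda>k. \<tau> k / tk k) at_top sequentially"
        proof -
          have f0: "(\<lambda>k. (1 / \<rho> (r k)) * norm w0) \<longlonglongrightarrow> 0"
            using tendsto_mult[OF sr tendsto_const[of "norm w0"]] s00 by simp
          have fp: "eventually (\<lambda>k. 0 < (1 / \<rho> (r k)) * norm w0) sequentially"
            using rp0 nw by simp
          have "filterlim (\<lambda>k. inverse ((1 / \<rho> (r k)) * norm w0)) at_top sequentially"
            by (rule filterlim_inverse_at_top[OF f0 fp])
          moreover have "inverse ((1 / \<rho> (r k)) * norm w0) = \<tau> k / tk k" for k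
            using tp[of "r k"] rp0[of "r k"] nw by (simp add: \<tau>_def tk_def field_simps)
          ultimately show ?thesis by simp
        qed
        have c5: "\<forall>k. \<eta> + \<tau> k *\<^sub>R \<zeta> (r k) \<in> lim_normal D (y0 + tk k *\<^sub>R wk k)"
        proof
          fix k
          have "tk k *\<^sub>R wk k = t (r k) *\<^sub>R w (r k)" using nw by (simp add: tk_def wk_def)
          then show "\<eta> + \<tau> k *\<^sub>R \<zeta> (r k) \<in> lim_normal D (y0 + tk k *\<^sub>R wk k)"
            unfolding \<tau>mem using mem by simp
        qed
        show ?thesis by (rule Dsub_intro[OF nz0 c1 zr c2 c3 \<tau>0 c4 c5])
      qed
      then show ?thesis using Q3 Lz0 by blast
    qed
  qed
qed



lemma dir_normal_intro:
  assumes "\<forall>k. tk k > 0" "tk \<longlonglongrightarrow> 0" "wk \<longlonglongrightarrow> w" "\<eta>k \<longlonglongrightarrow> \<eta>" "\<forall>k. \<eta>k k \<in> reg_normal C (z + tk k *\<^sub>R wk k)"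
  shows "\<eta> \<in> dir_normal C z w"
  unfolding dir_normal_def using assms by blast

lemma main_seq:
  fixes g :: "'a::euclidean_space \<Rightarrow> 'b::euclidean_space"
    and gd :: "'a \<Rightarrow> ('a \<Rightarrow>\<^sub>L 'b)"
    and gdd :: "'a \<Rightarrow> ('a \<Rightarrow>\<^sub>L ('a \<Rightarrow>\<^sub>L 'b))"
    and D :: "'b set" and xb u :: 'a
  assumes g_deriv: "\<And>x. (g has_derivative blinfun_apply (gd x)) (at x)"
    and gd_deriv: "\<And>x. (gd has_derivative blinfun_apply (gdd x)) (at x)"
    and in_gph: "(xb, 0) \<in> gph_Phi g D"
    and Q1: "\<forall>ys zs. adjoint (blinfun_apply (gd xb)) ys = 0 \<longrightarrow>
        adjoint (blinfun_apply (blinfun_apply (gdd xb) u)) ys + adjoint (blinfun_apply (gd xb)) zs = 0 \<longrightarrow>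
        ys \<in> dir_normal D (g xb) (gd xb u) \<longrightarrow>
        zs \<in> graph_deriv_normal D (g xb) ys (gd xb u) \<longrightarrow> ys = 0"
    and Q23: "(\<forall>ys zh. adjoint (blinfun_apply (gd xb)) ys = 0 \<longrightarrow>
                 adjoint (blinfun_apply (gd xb)) zh = 0 \<longrightarrow>
                 ys \<in> dir_normal D (g xb) (gd xb u) \<longrightarrow>
                 zh \<in> graph_deriv_normal D (g xb) ys 0 \<longrightarrow> zh = 0)
           \<or> (gd xb u \<noteq> 0 \<and>
              (\<forall>ys zh. adjoint (blinfun_apply (gd xb)) ys = 0 \<longrightarrow>
                 adjoint (blinfun_apply (gd xb)) zh = 0 \<longrightarrow>
                 ys \<in> dir_normal D (g xb) (gd xb u) \<longrightarrow>
                 zh \<notin> Dsub_normal D (g xb) ys ((1 / norm (gd xb u)) *\<^sub>R gd xb u)))"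
    and asym: "asym_seq (gph_Phi g D) xb u xk yk xsk lk xs ys"
  shows "\<exists>ys' zs'. xs = adjoint (blinfun_apply (blinfun_apply (gdd xb) u)) ys' + adjoint (blinfun_apply (gd xb)) zs'
     \<and> ys' \<in> dir_normal D (g xb) (gd xb u) \<and> adjoint (blinfun_apply (gd xb)) ys' = 0
     \<and> zs' \<in> graph_deriv_normal D (g xb) ys' (gd xb u)"
proof -
  let ?G = "gph_Phi g D"
  define A where "A = gd xb"
  define Ad where "Ad = adjoint (blinfun_apply A)"
  define H where "H \<mu> v = adjoint (blinfun_apply (blinfun_apply (gdd xb) v)) \<mu>" for \<mu> v
  have AdL: "linear Ad" unfolding Ad_def by (rule adj_linear)
  have AdB: "bounded_linear Ad" using AdL by (simp add: linear_conv_bounded_linear)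
  have sq: "\<forall>k. (xk k, yk k) \<in> ?G \<and> (xk k, 0) \<notin> ?G \<and> yk k \<noteq> 0 \<and> xsk k \<in> reg_coderiv ?G (xk k) (yk k) (lk k)"
    and xk: "xk \<longlonglongrightarrow> xb" and xsk: "xsk \<longlonglongrightarrow> xs"
    and uk: "(\<lambda>k. (1 / norm (xk k - xb)) *\<^sub>R (xk k - xb)) \<longlonglongrightarrow> u"
    and yt: "(\<lambda>k. (1 / norm (xk k - xb)) *\<^sub>R yk k) \<longlonglongrightarrow> 0"
    and lk: "filterlim (\<lambda>k. norm (lk k)) at_top sequentially"
    using asym unfolding asym_seq_def by blast+
  define t where "t k = norm (xk k - xb)" for k
  have xne: "xk k \<noteq> xb" for k using sq in_gph by metis
  have tp: "t k > 0" for k using xne[of k] by (simp add: t_def)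
  have t0: "t \<longlonglongrightarrow> 0"
  proof -
    have "(\<lambda>k. xk k - xb) \<longlonglongrightarrow> 0" using xk by (simp add: LIM_zero)
    then show ?thesis unfolding t_def by (rule tendsto_norm_zero)
  qed
  define U where "U k = (1 / t k) *\<^sub>R (xk k - xb)" for k
  have U: "U \<longlonglongrightarrow> u" using uk by (simp add: U_def[abs_def] t_def[abs_def])
  have xkU: "xk k = xb + t k *\<^sub>R U k" for k using tp[of k] by (simp add: U_def)
  have rl: "lk k \<in> reg_normal D (g (xk k) - yk k) \<and> xsk k = adjoint (blinfun_apply (gd (xk k))) (lk k)" for k
    using sq G_to_reg[OF g_deriv, of "xsk k" "lk k" D "xk k" "yk k"] by (simp add: reg_coderiv_def)
  define W where "W k = (1 / t k) *\<^sub>R (g (xk k) - yk k - g xb)" for k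
  have W: "W \<longlonglongrightarrow> A u"
  proof -
    have "(\<lambda>k. (1 / t k) *\<^sub>R (g (xb + t k *\<^sub>R U k) - g xb)) \<longlonglongrightarrow> A u"
      unfolding A_def by (rule dir_quot[OF g_deriv tp t0 U])
    from tendsto_diff[OF this yt[folded t_def]]
    show ?thesis by (simp add: W_def[abs_def] xkU[symmetric] algebra_simps)
  qed
  have dW: "g (xk k) - yk k = g xb + t k *\<^sub>R W k" for k using tp[of k] by (simp add: W_def)
  define \<nu> where "\<nu> k = norm (lk k)" for k
  define c where "c k = min (t k) (1 / \<nu> k)" for k
  have c0: "c k \<ge> 0" for k using tp[of k] by (simp add: c_def \<nu>_def)
  define \<mu> where "\<mu> k = c k *\<^sub>R lk k" for k
  define \<theta> where "\<theta> k = c k / t k" for k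
  have \<mu>reg: "\<mu> k \<in> reg_normal D (g xb + t k *\<^sub>R W k)" for k
    unfolding \<mu>_def dW[symmetric] using reg_normal_scale rl c0 by blast
  have n\<mu>: "norm (\<mu> k) \<le> 1" for k
  proof (cases "\<nu> k = 0")
    case True then show ?thesis by (simp add: \<mu>_def \<nu>_def)
  next
    case False
    then have "\<nu> k > 0" by (simp add: \<nu>_def)
    have "norm (\<mu> k) = c k * \<nu> k" using c0[of k] by (simp add: \<mu>_def \<nu>_def)
    also have "\<dots> \<le> (1 / \<nu> k) * \<nu> k" by (rule mult_right_mono) (simp_all add: c_def \<nu>_def)
    also have "\<dots> = 1" using \<open>\<nu> k > 0\<close> by simp
    finally show ?thesis .
  qed
  have \<theta>01: "0 \<le> \<theta> k \<and> \<theta> k \<le> 1" for k using tp[of k] c0[of k] by (simp add: \<theta>_def c_def)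
  define P where "P k = (\<mu> k, \<theta> k)" for k
  have "bounded (range P)"
  proof -
    have "norm (P k) \<le> 2" for k
    proof -
      have "norm (P k) \<le> norm (\<mu> k) + norm (\<theta> k)" unfolding P_def by (rule norm_Pair_le)
      then show ?thesis using n\<mu>[of k] \<theta>01[of k] by simp
    qed
    then show ?thesis unfolding bounded_iff by blast
  qed
  then obtain r l where r: "strict_mono r" and Pl: "(P \<circ> r) \<longlonglongrightarrow> l"
    using bounded_imp_convergent_subsequence by blast
  obtain \<eta> \<theta>0 where l: "l = (\<eta>, \<theta>0)" by (cases l)
  have Mr: "(\<lambda>k. \<mu> (r k)) \<longlonglongrightarrow> \<eta>" using tendsto_fst[OF Pl] by (simp add: l P_def o_def)
  have Thr: "(\<lambda>k. \<theta> (r k)) \<longlonglongrightarrow> \<theta>0" using tendsto_snd[OF Pl] by (simp add: l P_def o_def)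
  have th0: "\<theta>0 \<ge> 0" by (rule LIMSEQ_le_const[OF Thr]) (use \<theta>01 in auto)
  have tr: "(\<lambda>k. t (r k)) \<longlonglongrightarrow> 0" using LIMSEQ_subseq_LIMSEQ[OF t0 r] by (simp add: o_def)
  have Wr: "(\<lambda>k. W (r k)) \<longlonglongrightarrow> A u" using LIMSEQ_subseq_LIMSEQ[OF W r] by (simp add: o_def)
  have Ur: "(\<lambda>k. U (r k)) \<longlonglongrightarrow> u" using LIMSEQ_subseq_LIMSEQ[OF U r] by (simp add: o_def)
  have Xr: "(\<lambda>k. xsk (r k)) \<longlonglongrightarrow> xs" using LIMSEQ_subseq_LIMSEQ[OF xsk r] by (simp add: o_def)
  define E where "E k = gd (xk k) - gd xb - blinfun_apply (gdd xb) (xk k - xb)" for k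
  have Er: "(\<lambda>k. norm (E (r k)) / t (r k)) \<longlonglongrightarrow> 0"
  proof -
    have h0: "(\<lambda>k. xk k - xb) \<longlonglongrightarrow> 0" using xk by (simp add: LIM_zero)
    have "(\<lambda>k. norm (gd (xb + (xk k - xb)) - gd xb - blinfun_apply (gdd xb) (xk k - xb)) / t k) \<longlonglongrightarrow> 0"
      by (rule rem_seq[OF gd_deriv h0, of 1]) (simp_all add: t_def xne)
    then have "(\<lambda>k. norm (E k) / t k) \<longlonglongrightarrow> 0" by (simp add: E_def)
    from LIMSEQ_subseq_LIMSEQ[OF this r] show ?thesis by (simp add: o_def)
  qed
  have key: "(1 / t k) *\<^sub>R Ad (\<mu> k) = \<theta> k *\<^sub>R xsk k - H (\<mu> k) (U k) - (1 / t k) *\<^sub>R adjoint (blinfun_apply (E k)) (\<mu> k)" for k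
  proof -
    have gdx: "gd (xk k) = E k + A + t k *\<^sub>R blinfun_apply (gdd xb) (U k)"
      using tp[of k] by (simp add: E_def A_def U_def blinfun.scaleR_right)
    have xe: "xsk k = adjoint (blinfun_apply (E k)) (lk k) + Ad (lk k) + t k *\<^sub>R H (lk k) (U k)"
      using rl[of k] unfolding gdx by (simp add: adj_add adj_scale Ad_def H_def)
    have lin: "Ad (\<mu> k) = c k *\<^sub>R Ad (lk k)" "H (\<mu> k) (U k) = c k *\<^sub>R H (lk k) (U k)"
       "adjoint (blinfun_apply (E k)) (\<mu> k) = c k *\<^sub>R adjoint (blinfun_apply (E k)) (lk k)"
      by (simp_all add: \<mu>_def Ad_def H_def adj_scale_arg)
    show ?thesis unfolding lin xe \<theta>_def using tp[of k]
      by (simp add: algebra_simps)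
  qed
  define v where "v = \<theta>0 *\<^sub>R xs - H \<eta> u"
  have Hr: "(\<lambda>k. H (\<mu> (r k)) (U (r k))) \<longlonglongrightarrow> H \<eta> u"
    unfolding H_def
    by (rule adj_tendsto[OF bounded_linear.tendsto[OF blinfun.bounded_linear_right Ur] Mr])
  have Rr: "(\<lambda>k. (1 / t (r k)) *\<^sub>R adjoint (blinfun_apply (E (r k))) (\<mu> (r k))) \<longlonglongrightarrow> 0"
  proof (rule tendsto_norm_zero_cancel, rule Lim_null_comparison[OF _ Er])
    show "\<forall>\<^sub>F k in sequentially. norm (norm ((1 / t (r k)) *\<^sub>R adjoint (blinfun_apply (E (r k))) (\<mu> (r k)))) \<le> norm (E (r k)) / t (r k)"
    proof (rule always_eventually, rule allI)
      fix k
      have "norm ((1 / t (r k)) *\<^sub>R adjoint (blinfun_apply (E (r k))) (\<mu> (r k))) =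
          norm (adjoint (blinfun_apply (E (r k))) (\<mu> (r k))) / t (r k)" using tp[of "r k"] by simp
      also have "\<dots> \<le> (norm (E (r k)) * norm (\<mu> (r k))) / t (r k)"
        using tp[of "r k"] by (intro divide_right_mono adj_norm) simp
      also have "\<dots> \<le> norm (E (r k)) / t (r k)"
        using tp[of "r k"] n\<mu>[of "r k"] by (simp add: divide_right_mono mult_left_le)
      finally show "norm (norm ((1 / t (r k)) *\<^sub>R adjoint (blinfun_apply (E (r k))) (\<mu> (r k)))) \<le> norm (E (r k)) / t (r k)"
        by simp
    qed
  qed
  have LAd: "(\<lambda>k. (1 / t (r k)) *\<^sub>R Ad (\<mu> (r k))) \<longlonglongrightarrow> v"
  proof -
    have "(\<lambda>k. \<theta> (r k) *\<^sub>R xsk (r k) - H (\<mu> (r k)) (U (r k)) - (1 / t (r k)) *\<^sub>R adjoint (blinfun_apply (E (r k))) (\<mu> (r k)))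
       \<longlonglongrightarrow> \<theta>0 *\<^sub>R xs - H \<eta> u - 0"
      by (intro tendsto_diff tendsto_scaleR Thr Xr Hr Rr)
    then show ?thesis unfolding key[symmetric] v_def by simp
  qed
  have Ad\<eta>: "Ad \<eta> = 0"
  proof -
    have "(\<lambda>k. t (r k) *\<^sub>R ((1 / t (r k)) *\<^sub>R Ad (\<mu> (r k)))) \<longlonglongrightarrow> 0 *\<^sub>R v"
      by (intro tendsto_scaleR tr LAd)
    moreover have "t (r k) *\<^sub>R ((1 / t (r k)) *\<^sub>R Ad (\<mu> (r k))) = Ad (\<mu> (r k))" for k
      using tp[of "r k"] by simp
    ultimately have "(\<lambda>k. Ad (\<mu> (r k))) \<longlonglongrightarrow> 0" by simp
    moreover have "(\<lambda>k. Ad (\<mu> (r k))) \<longlonglongrightarrow> Ad \<eta>" by (rule bounded_linear.tendsto[OF AdB Mr])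
    ultimately show ?thesis using LIMSEQ_unique by blast
  qed
  have \<eta>dir: "\<eta> \<in> dir_normal D (g xb) (gd xb u)"
    by (rule dir_normal_intro[where tk="\<lambda>k. t (r k)" and wk="\<lambda>k. W (r k)" and \<eta>k="\<lambda>k. \<mu> (r k)"])
       (use tp tr Wr Mr \<mu>reg in \<open>auto simp: A_def\<close>)
  obtain z where z: "z \<in> graph_deriv_normal D (g xb) \<eta> (A u)" and Adz: "Ad z = v"
  proof -
    have "\<exists>z. z \<in> graph_deriv_normal D (g xb) \<eta> (A u) \<and> Ad z = v"
    proof (rule core[OF AdL, where t="\<lambda>k. t (r k)" and w="\<lambda>k. W (r k)" and \<mu>="\<lambda>k. \<mu> (r k)"])
      show "\<And>k. 0 < t (r k)" by (rule tp)
      show "(\<lambda>k. t (r k)) \<longlonglongrightarrow> 0" by (rule tr)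
      show "(\<lambda>k. W (r k)) \<longlonglongrightarrow> A u" by (rule Wr)
      show "(\<lambda>k. \<mu> (r k)) \<longlonglongrightarrow> \<eta>" by (rule Mr)
      show "\<And>k. \<mu> (r k) \<in> lim_normal D (g xb + t (r k) *\<^sub>R W (r k))" by (rule reg_sub_lim[OF \<mu>reg])
      have "Ad ((1 / t (r k)) *\<^sub>R (\<mu> (r k) - \<eta>)) = (1 / t (r k)) *\<^sub>R Ad (\<mu> (r k))" for k
        using Ad\<eta> by (simp add: linear_simps[OF AdB])
      then show "(\<lambda>k. Ad ((1 / t (r k)) *\<^sub>R (\<mu> (r k) - \<eta>))) \<longlonglongrightarrow> v" using LAd by simp
      show "(\<forall>\<zeta>. Ad \<zeta> = 0 \<longrightarrow> \<zeta> \<in> graph_deriv_normal D (g xb) \<eta> 0 \<longrightarrow> \<zeta> = 0) \<or>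
          (A u \<noteq> 0 \<and> (\<forall>\<zeta>. Ad \<zeta> = 0 \<longrightarrow> \<zeta> \<notin> Dsub_normal D (g xb) \<eta> ((1 / norm (A u)) *\<^sub>R A u)))"
        using Q23 Ad\<eta> \<eta>dir unfolding Ad_def A_def by blast
    qed
    then show ?thesis using that by blast
  qed
  show ?thesis
  proof (cases "\<theta>0 > 0")
    case True
    define ys' where "ys' = (1 / \<theta>0) *\<^sub>R \<eta>"
    define zs' where "zs' = (1 / \<theta>0) *\<^sub>R z"
    have hx: "\<theta>0 *\<^sub>R xs = H \<eta> u + Ad z" using Adz by (simp add: v_def)
    have "xs = (1 / \<theta>0) *\<^sub>R (H \<eta> u + Ad z)" unfolding hx[symmetric] using True by simp
    also have "\<dots> = H ys' u + Ad zs'"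
      by (simp add: ys'_def zs'_def H_def Ad_def adj_scale_arg scaleR_add_right)
    finally have xs_eq: "xs = H ys' u + Ad zs'" .
    have "ys' \<in> dir_normal D (g xb) (gd xb u)" unfolding ys'_def
      using dir_normal_scale[OF \<eta>dir] True by simp
    moreover have "Ad ys' = 0" by (simp add: ys'_def Ad_def adj_scale_arg Ad\<eta>[unfolded Ad_def])
    moreover have "zs' \<in> graph_deriv_normal D (g xb) ys' (gd xb u)" unfolding ys'_def zs'_def
      using gdn_scale[OF z] True by (simp add: A_def)
    ultimately show ?thesis using xs_eq unfolding H_def Ad_def A_def by blast
  next
    case False
    then have th00: "\<theta>0 = 0" using th0 by simp
    have "H \<eta> u + Ad z = 0" using Adz th00 by (simp add: v_def)
    then have "\<eta> = 0" using Q1 Ad\<eta> \<eta>dir z unfolding H_def Ad_def A_def by blast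
    moreover have "norm \<eta> = 1"
    proof -
      obtain N where N: "\<And>k. k \<ge> N \<Longrightarrow> \<nu> k > 0"
        using lk unfolding filterlim_at_top_dense eventually_sequentially \<nu>_def[symmetric] by blast
      have ev1: "eventually (\<lambda>k. \<theta> (r k) < 1) sequentially"
        using Thr th00 by (auto simp: order_tendsto_iff)
      have "eventually (\<lambda>k. norm (\<mu> (r k)) = 1) sequentially"
      proof -
        have "eventually (\<lambda>k. k \<ge> N) sequentially" by (rule eventually_ge_at_top)
        then show ?thesis
        proof (rule eventually_mono[OF eventually_conj[OF ev1]])
          fix k assume k: "\<theta> (r k) < 1 \<and> k \<ge> N"
          then have nu: "\<nu> (r k) > 0" using N seq_suble[OF r, of k] by auto
          have "c (r k) < t (r k)" using k tp[of "r k"] by (simp add: \<theta>_def divide_less_eq)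
          then have "c (r k) = 1 / \<nu> (r k)" by (simp add: c_def min_def split: if_splits)
          then show "norm (\<mu> (r k)) = 1" using nu by (simp add: \<mu>_def \<nu>_def)
        qed
      qed
      then have "(\<lambda>k. norm (\<mu> (r k))) \<longlonglongrightarrow> 1" by (rule tendsto_eventually)
      moreover have "(\<lambda>k. norm (\<mu> (r k))) \<longlonglongrightarrow> norm \<eta>" by (rule tendsto_norm[OF Mr])
      ultimately show ?thesis using LIMSEQ_unique by metis
    qed
    ultimately show ?thesis by simp
  qed
qed


theorem theorem5p18:
  fixes g :: "'a::euclidean_space \<Rightarrow> 'b::euclidean_space"
    and gd :: "'a \<Rightarrow> ('a \<Rightarrow>\<^sub>L 'b)"
    and gdd :: "'a \<Rightarrow> ('a \<Rightarrow>\<^sub>L ('a \<Rightarrow>\<^sub>L 'b))"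
    and D :: "'b set" and xb u :: 'a
  assumes g_deriv: "\<And>x. (g has_derivative blinfun_apply (gd x)) (at x)"
    and gd_deriv: "\<And>x. (gd has_derivative blinfun_apply (gdd x)) (at x)"
    and gdd_cont: "continuous_on UNIV gdd"
    and D_closed: "closed D"
    and in_gph: "(xb, 0) \<in> gph_Phi g D"
    and u_unit: "norm u = 1"
    and Q1: "\<And>ys zs. adjoint (blinfun_apply (gd xb)) ys = 0 \<Longrightarrow>
        adjoint (blinfun_apply (blinfun_apply (gdd xb) u)) ys + adjoint (blinfun_apply (gd xb)) zs = 0 \<Longrightarrow>
        ys \<in> dir_normal D (g xb) (gd xb u) \<Longrightarrow>
        zs \<in> graph_deriv_normal D (g xb) ys (gd xb u) \<Longrightarrow> ys = 0"
    and Q23: "(\<forall>ys zh. adjoint (blinfun_apply (gd xb)) ys = 0 \<longrightarrow>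
                 adjoint (blinfun_apply (gd xb)) zh = 0 \<longrightarrow>
                 ys \<in> dir_normal D (g xb) (gd xb u) \<longrightarrow>
                 zh \<in> graph_deriv_normal D (g xb) ys 0 \<longrightarrow> zh = 0)
           \<or> (gd xb u \<noteq> 0 \<and>
              (\<forall>ys zh. adjoint (blinfun_apply (gd xb)) ys = 0 \<longrightarrow>
                 adjoint (blinfun_apply (gd xb)) zh = 0 \<longrightarrow>
                 ys \<in> dir_normal D (g xb) (gd xb u) \<longrightarrow>
                 zh \<notin> Dsub_normal D (g xb) ys ((1 / norm (gd xb u)) *\<^sub>R gd xb u)))"
  shows "((\<forall>xs ys zs.
             xs = adjoint (blinfun_apply (blinfun_apply (gdd xb) u)) ys + adjoint (blinfun_apply (gd xb)) zs \<longrightarrow>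
             ys \<in> dir_normal D (g xb) (gd xb u) \<longrightarrow>
             adjoint (blinfun_apply (gd xb)) ys = 0 \<longrightarrow>
             zs \<in> graph_deriv_normal D (g xb) ys (gd xb u) \<longrightarrow>
             (\<exists>lam\<in>lim_normal D (g xb). xs = adjoint (blinfun_apply (gd xb)) lam))
          \<longrightarrow> asym_regular (gph_Phi g D) xb u)
       \<and> ((\<forall>xs ys zs.
             xs = adjoint (blinfun_apply (blinfun_apply (gdd xb) u)) ys + adjoint (blinfun_apply (gd xb)) zs \<longrightarrow>
             ys \<in> dir_normal D (g xb) (gd xb u) \<longrightarrow>
             adjoint (blinfun_apply (gd xb)) ys = 0 \<longrightarrow>
             zs \<in> graph_deriv_normal D (g xb) ys (gd xb u) \<longrightarrow>
             (\<exists>lam\<in>dir_normal D (g xb) (gd xb u). xs = adjoint (blinfun_apply (gd xb)) lam))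
          \<longrightarrow> strong_asym_regular (gph_Phi g D) xb u)"
  proof -
  have Q1all: "\<forall>ys zs. adjoint (blinfun_apply (gd xb)) ys = 0 \<longrightarrow>
        adjoint (blinfun_apply (blinfun_apply (gdd xb) u)) ys + adjoint (blinfun_apply (gd xb)) zs = 0 \<longrightarrow>
        ys \<in> dir_normal D (g xb) (gd xb u) \<longrightarrow>
        zs \<in> graph_deriv_normal D (g xb) ys (gd xb u) \<longrightarrow> ys = 0"
    using Q1 by blast
  show ?thesis
proof (intro conjI impI)
  assume P: "\<forall>xs ys zs.
             xs = adjoint (blinfun_apply (blinfun_apply (gdd xb) u)) ys + adjoint (blinfun_apply (gd xb)) zs \<longrightarrow>
             ys \<in> dir_normal D (g xb) (gd xb u) \<longrightarrow>
             adjoint (blinfun_apply (gd xb)) ys = 0 \<longrightarrow>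
             zs \<in> graph_deriv_normal D (g xb) ys (gd xb u) \<longrightarrow>
             (\<exists>lam\<in>lim_normal D (g xb). xs = adjoint (blinfun_apply (gd xb)) lam)"
  show "asym_regular (gph_Phi g D) xb u" unfolding asym_regular_def
  proof (intro allI impI)
    fix xk yk xsk lk xs ys assume a: "asym_seq (gph_Phi g D) xb u xk yk xsk lk xs ys"
    obtain ys' zs' where h: "xs = adjoint (blinfun_apply (blinfun_apply (gdd xb) u)) ys' + adjoint (blinfun_apply (gd xb)) zs'"
       "ys' \<in> dir_normal D (g xb) (gd xb u)" "adjoint (blinfun_apply (gd xb)) ys' = 0"
       "zs' \<in> graph_deriv_normal D (g xb) ys' (gd xb u)"
      using main_seq[OF g_deriv gd_deriv in_gph Q1all Q23 a] by blast
    obtain lam where lam: "lam \<in> lim_normal D (g xb)" "xs = adjoint (blinfun_apply (gd xb)) lam"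
      using P h by blast
    have "xs \<in> lim_coderiv (gph_Phi g D) xb 0 lam"
      using lim_to_G[OF g_deriv lam(1)] lam(2) by (simp add: lim_coderiv_def)
    then show "xs \<in> (\<Union>ys'. lim_coderiv (gph_Phi g D) xb 0 ys')" by blast
  qed
next
  assume P: "\<forall>xs ys zs.
             xs = adjoint (blinfun_apply (blinfun_apply (gdd xb) u)) ys + adjoint (blinfun_apply (gd xb)) zs \<longrightarrow>
             ys \<in> dir_normal D (g xb) (gd xb u) \<longrightarrow>
             adjoint (blinfun_apply (gd xb)) ys = 0 \<longrightarrow>
             zs \<in> graph_deriv_normal D (g xb) ys (gd xb u) \<longrightarrow>
             (\<exists>lam\<in>dir_normal D (g xb) (gd xb u). xs = adjoint (blinfun_apply (gd xb)) lam)"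
  have cgd: "isCont gd xb" using has_derivative_continuous[OF gd_deriv] .
  show "strong_asym_regular (gph_Phi g D) xb u" unfolding strong_asym_regular_def
  proof (intro allI impI)
    fix xk yk xsk lk xs ys assume a: "asym_seq (gph_Phi g D) xb u xk yk xsk lk xs ys"
    obtain ys' zs' where h: "xs = adjoint (blinfun_apply (blinfun_apply (gdd xb) u)) ys' + adjoint (blinfun_apply (gd xb)) zs'"
       "ys' \<in> dir_normal D (g xb) (gd xb u)" "adjoint (blinfun_apply (gd xb)) ys' = 0"
       "zs' \<in> graph_deriv_normal D (g xb) ys' (gd xb u)"
      using main_seq[OF g_deriv gd_deriv in_gph Q1all Q23 a] by blast
    obtain lam where lam: "lam \<in> dir_normal D (g xb) (gd xb u)" "xs = adjoint (blinfun_apply (gd xb)) lam"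
      using P h by blast
    have "xs \<in> dir_coderiv (gph_Phi g D) xb 0 u 0 lam"
      using dir_to_G[OF g_deriv cgd lam(1)] lam(2) by (simp add: dir_coderiv_def)
    then show "xs \<in> (\<Union>ys'. dir_coderiv (gph_Phi g D) xb 0 u 0 ys')" by blast
  qed
qed
qed

end
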